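(* Let $A$ and $B$ be connected graded $k$-algebras generated in degree $1$. Suppose that $d=\dim_k A_1<\infty$ and that $A_{\ge1}$ is the unique codimension $1$ ideal of $A$ with tangent dimension $d$. If $A\cong B$ as ungraded algebras, then $A\cong B$ as graded algebras.
   Context: A connected graded algebra satisfies $A_0=k$, and $A_{\ge1}=\bigoplus_{i\ge1}A_i$. A codimension $1$ ideal of tangent dimension $s$ in an algebra $R$ is a two-sided ideal $I$ with $\dim_k R/I=1$ and $\dim_k I/I^2=s$. *)

theory Defs
  imports Complex_Main
begin

definition is_algebra :: "('k::field \<Rightarrow> 'a::ring_1 \<Rightarrow> 'a) \<Rightarrow> bool" where
  "is_algebra sc \<longleftrightarrow> Vector_Spaces.vector_space sc \<and>
     (\<forall>c x y. sc c (x * y) = sc c x * y \<and> sc c (x * y) = x * sc c y)"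

definition fin_dim :: "('k::field \<Rightarrow> 'a::ab_group_add \<Rightarrow> 'a) \<Rightarrow> 'a set \<Rightarrow> bool" where
  "fin_dim sc V \<longleftrightarrow> (\<exists>S. finite S \<and> Modules.module.span sc S = V)"

definition graded :: "('k::field \<Rightarrow> 'a::ring_1 \<Rightarrow> 'a) \<Rightarrow> (nat \<Rightarrow> 'a set) \<Rightarrow> bool" where
  "graded sc A \<longleftrightarrow> is_algebra sc \<and>
     (\<forall>i. Modules.module.subspace sc (A i)) \<and>
     (\<forall>i j x y. x \<in> A i \<longrightarrow> y \<in> A j \<longrightarrow> x * y \<in> A (i + j)) \<and>
     (\<forall>x. \<exists>!c :: nat \<Rightarrow> 'a. finite {i. c i \<noteq> 0} \<and> (\<forall>i. c i \<in> A i) \<and>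
            x = (\<Sum>i\<in>{i. c i \<noteq> 0}. c i))"

text \<open>Connected: A_0 = k, i.e. c \<mapsto> c\<cdot>1 is a bijection k \<rightarrow> A_0.\<close>
definition connected_graded :: "('k::field \<Rightarrow> 'a::ring_1 \<Rightarrow> 'a) \<Rightarrow> (nat \<Rightarrow> 'a set) \<Rightarrow> bool" where
  "connected_graded sc A \<longleftrightarrow> graded sc A \<and>
     A 0 = range (\<lambda>c. sc c 1) \<and> inj (\<lambda>c. sc c 1)"

text \<open>Generated in degree 1: the subalgebra generated by A_1 (the span of all
  finite products of elements of A_1, the empty product being 1) is everything.\<close>
definition generated_in_degree_1 :: "('k::field \<Rightarrow> 'a::ring_1 \<Rightarrow> 'a) \<Rightarrow> (nat \<Rightarrow> 'a set) \<Rightarrow> bool" where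
  "generated_in_degree_1 sc A \<longleftrightarrow>
     Modules.module.span sc {prod_list xs | xs. set xs \<subseteq> A 1} = UNIV"

definition aug_ideal :: "('k::field \<Rightarrow> 'a::ring_1 \<Rightarrow> 'a) \<Rightarrow> (nat \<Rightarrow> 'a set) \<Rightarrow> 'a set" where
  "aug_ideal sc A = Modules.module.span sc (\<Union>i\<in>{1..}. A i)"

definition two_sided_ideal :: "('k::field \<Rightarrow> 'a::ring_1 \<Rightarrow> 'a) \<Rightarrow> 'a set \<Rightarrow> bool" where
  "two_sided_ideal sc I \<longleftrightarrow> Modules.module.subspace sc I \<and>
     (\<forall>r x. x \<in> I \<longrightarrow> r * x \<in> I \<and> x * r \<in> I)"

text \<open>dim_k (V / U) = n for subspaces U \<subseteq> V: some (equivalently every) complement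
  W of U in V is finite-dimensional of dimension n.\<close>
definition quot_dim_eq :: "('k::field \<Rightarrow> 'a::ab_group_add \<Rightarrow> 'a) \<Rightarrow> 'a set \<Rightarrow> 'a set \<Rightarrow> nat \<Rightarrow> bool" where
  "quot_dim_eq sc V U n \<longleftrightarrow> U \<subseteq> V \<and>
     (\<exists>W. Modules.module.subspace sc W \<and> W \<subseteq> V \<and> U \<inter> W = {0} \<and>
          {u + w | u w. u \<in> U \<and> w \<in> W} = V \<and>
          fin_dim sc W \<and> Vector_Spaces.vector_space.dim sc W = n)"

definition ideal_square :: "('k::field \<Rightarrow> 'a::ring_1 \<Rightarrow> 'a) \<Rightarrow> 'a set \<Rightarrow> 'a set" where
  "ideal_square sc I = Modules.module.span sc {x * y | x y. x \<in> I \<and> y \<in> I}"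

definition codim1_ideal_tangent_dim :: "('k::field \<Rightarrow> 'a::ring_1 \<Rightarrow> 'a) \<Rightarrow> 'a set \<Rightarrow> nat \<Rightarrow> bool" where
  "codim1_ideal_tangent_dim sc I s \<longleftrightarrow> two_sided_ideal sc I \<and>
     quot_dim_eq sc UNIV I 1 \<and> quot_dim_eq sc I (ideal_square sc I) s"

definition algebra_iso :: "('k::field \<Rightarrow> 'a::ring_1 \<Rightarrow> 'a) \<Rightarrow> ('k \<Rightarrow> 'b::ring_1 \<Rightarrow> 'b) \<Rightarrow> ('a \<Rightarrow> 'b) \<Rightarrow> bool" where
  "algebra_iso scA scB f \<longleftrightarrow> bij f \<and>
     (\<forall>x y. f (x + y) = f x + f y) \<and> (\<forall>c x. f (scA c x) = scB c (f x)) \<and>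
     (\<forall>x y. f (x * y) = f x * f y) \<and> f 1 = 1"

definition graded_algebra_iso :: "('k::field \<Rightarrow> 'a::ring_1 \<Rightarrow> 'a) \<Rightarrow> (nat \<Rightarrow> 'a set) \<Rightarrow>
    ('k \<Rightarrow> 'b::ring_1 \<Rightarrow> 'b) \<Rightarrow> (nat \<Rightarrow> 'b set) \<Rightarrow> ('a \<Rightarrow> 'b) \<Rightarrow> bool" where
  "graded_algebra_iso scA A scB B f \<longleftrightarrow> algebra_iso scA scB f \<and> (\<forall>i. f ` A i = B i)"

end

theory Submission imports Defs begin


context vector_space begin

lemma indep_union:
  assumes "finite T" "independent F" "independent T" "span F \<inter> span T \<subseteq> {0}"
  shows "independent (F \<union> T)"
  using assms
proof (induction T rule: finite_induct)
  case empty then show ?case by simp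
next
  case (insert t T)
  have iT: "independent T" using insert.prems(2) independent_mono by blast
  have "span T \<subseteq> span (insert t T)" by (rule span_mono) auto
  then have iFT: "independent (F \<union> T)" using insert iT by blast
  have tn: "t \<notin> span T" using insert.prems(2) insert.hyps(2) by (simp add: independent_insert)
  have "t \<notin> span (F \<union> T)"
  proof
    assume "t \<in> span (F \<union> T)"
    then obtain a b where ab: "a \<in> span F" "b \<in> span T" "t = a + b" by (auto simp: span_Un)
    have "a = t - b" using ab by simp
    moreover have "t - b \<in> span (insert t T)"
      using ab(2) \<open>span T \<subseteq> span (insert t T)\<close> by (meson insertI1 span_base span_diff subsetD)
    ultimately have "a = 0" using ab(1) insert.prems(3) by auto
    then show False using ab tn by simp
  qed
  then show ?case using iFT by (simp add: independent_insertI)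
qed

lemma compl_bound_finite:
  assumes U: "subspace U" and W: "subspace W" and UW: "U \<inter> W \<subseteq> {0}"
    and cov: "W \<subseteq> {u + s | u s. u \<in> U \<and> s \<in> span S}" and fS: "finite S"
    and T: "finite T" "independent T" "T \<subseteq> W"
  shows "card T \<le> card S"
proof -
  have "\<forall>t\<in>T. \<exists>s. s \<in> span S \<and> t - s \<in> U"
  proof
    fix t assume "t \<in> T"
    then obtain u s where "u \<in> U" "s \<in> span S" "t = u + s" using cov T(3) by blast
    then show "\<exists>s. s \<in> span S \<and> t - s \<in> U" by (intro exI[of _ s]) auto
  qed
  then obtain sf where sf: "\<And>t. t \<in> T \<Longrightarrow> sf t \<in> span S \<and> t - sf t \<in> U" by metis
  define G where "G = (\<lambda>t. t - sf t) ` T"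
  have fG: "finite G" using T by (simp add: G_def)
  have GU: "G \<subseteq> U" using sf by (auto simp: G_def)
  obtain F where F: "F \<subseteq> G" "independent F" "G \<subseteq> span F" using maximal_independent_subset by blast
  have fF: "finite F" using F fG finite_subset by blast
  have spF: "span F \<subseteq> U" using F GU U span_minimal by blast
  have spT: "span T \<subseteq> W" using T W span_minimal by blast
  have disj: "span F \<inter> span T \<subseteq> {0}" using spF spT UW by blast
  have ind: "independent (F \<union> T)" by (rule indep_union[OF T(1) F(2) T(2) disj])
  have FT: "F \<inter> T = {}"
  proof -
    have "F \<inter> T \<subseteq> {0}" using disj span_superset by blast
    moreover have "0 \<notin> T" using T(2) dependent_zero by blast
    ultimately show ?thesis by blast
  qed
  have sub: "F \<union> T \<subseteq> span (F \<union> S)"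
  proof
    fix x assume "x \<in> F \<union> T"
    then show "x \<in> span (F \<union> S)"
    proof
      assume "x \<in> F" then show ?thesis by (simp add: span_base)
    next
      assume xT: "x \<in> T"
      have "x - sf x \<in> span F" using F(3) xT by (auto simp: G_def)
      then have a: "x - sf x \<in> span (F \<union> S)" using span_mono[of F "F \<union> S"] by blast
      have "sf x \<in> span (F \<union> S)" using sf[OF xT] span_mono[of S "F \<union> S"] by blast
      then have "(x - sf x) + sf x \<in> span (F \<union> S)" using a span_add by blast
      then show ?thesis by simp
    qed
  qed
  have "card (F \<union> T) \<le> card (F \<union> S)"
    using independent_span_bound[OF _ ind sub] fF fS by simp
  also have "\<dots> \<le> card F + card S" by (rule card_Un_le)
  finally show ?thesis using card_Un_disjoint[OF fF T(1) FT] by simp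
qed

lemma compl_bound:
  assumes U: "subspace U" and W: "subspace W" and UW: "U \<inter> W \<subseteq> {0}"
    and cov: "W \<subseteq> {u + s | u s. u \<in> U \<and> s \<in> span S}" and fS: "finite S"
  shows "fin_dim scale W \<and> dim W \<le> card S"
proof -
  obtain B where B: "B \<subseteq> W" "independent B" "W \<subseteq> span B" using maximal_independent_subset by blast
  have fB: "finite B"
  proof (rule ccontr)
    assume "infinite B"
    then obtain T where "T \<subseteq> B" "card T = Suc (card S)" using infinite_arbitrarily_large by blast
    moreover have "finite T" using calculation card_ge_0_finite by force
    ultimately show False using compl_bound_finite[OF U W UW cov fS, of T] B independent_mono by force
  qed
  have "card B \<le> card S" using compl_bound_finite[OF U W UW cov fS fB B(2) B(1)] .
  moreover have "card B = dim W" using basis_card_eq_dim B by blast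
  moreover have "span B = W" using B W span_subspace by blast
  ultimately show ?thesis using fB unfolding fin_dim_def by auto
qed

end


locale galg =
  fixes sc :: "'k::field \<Rightarrow> 'a::ring_1 \<Rightarrow> 'a" and A :: "nat \<Rightarrow> 'a set"
  assumes gr: "graded sc A"
begin

sublocale vector_space sc using gr by (simp add: graded_def is_algebra_def)

lemma scm: "sc c (x*y) = sc c x * y" "sc c (x*y) = x * sc c y"
  using gr unfolding graded_def is_algebra_def by blast+

lemma subA: "subspace (A i)" using gr by (simp add: graded_def)
lemma mulA: "x \<in> A i \<Longrightarrow> y \<in> A j \<Longrightarrow> x * y \<in> A (i + j)" using gr by (simp add: graded_def)
lemma zeroA[simp]: "0 \<in> A i" using subA subspace_0 by blast

lemma decomp: "\<exists>!c :: nat \<Rightarrow> 'a. finite {i. c i \<noteq> 0} \<and> (\<forall>i. c i \<in> A i) \<and>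
            x = (\<Sum>i\<in>{i. c i \<noteq> 0}. c i)"
  using gr by (simp add: graded_def)

definition hc :: "nat \<Rightarrow> 'a \<Rightarrow> 'a" where
  "hc n x = (THE c. finite {i. c i \<noteq> 0} \<and> (\<forall>i. c i \<in> A i) \<and> x = (\<Sum>i\<in>{i. c i \<noteq> 0}. c i)) n"

lemma hc_prop: "finite {i. hc i x \<noteq> 0} \<and> (\<forall>i. hc i x \<in> A i) \<and> x = (\<Sum>i\<in>{i. hc i x \<noteq> 0}. hc i x)"
proof -
  let ?P = "\<lambda>c. finite {i. c i \<noteq> 0} \<and> (\<forall>i. c i \<in> A i) \<and> x = (\<Sum>i\<in>{i. c i \<noteq> 0}. c i)"
  have "?P (THE c. ?P c)" using decomp[of x] by (rule theI')
  then show ?thesis unfolding hc_def .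
qed

lemma hc_in: "hc i x \<in> A i" using hc_prop by blast
lemma hc_fin: "finite {i. hc i x \<noteq> 0}" using hc_prop by blast

lemma hc_sum: assumes "finite F" "{i. hc i x \<noteq> 0} \<subseteq> F" shows "x = (\<Sum>i\<in>F. hc i x)"
proof -
  have "(\<Sum>i\<in>F. hc i x) = (\<Sum>i\<in>{i. hc i x \<noteq> 0}. hc i x)"
    by (rule sum.mono_neutral_right) (use assms in auto)
  then show ?thesis using hc_prop[of x] by simp
qed

lemma hc_char:
  assumes "finite F" "\<And>i. c i \<in> A i" "\<And>i. i \<notin> F \<Longrightarrow> c i = 0" "x = (\<Sum>i\<in>F. c i)"
  shows "hc n x = c n"
proof -
  let ?P = "\<lambda>c. finite {i. c i \<noteq> 0} \<and> (\<forall>i. c i \<in> A i) \<and> x = (\<Sum>i\<in>{i. c i \<noteq> 0}. c i)"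
  have sub: "{i. c i \<noteq> 0} \<subseteq> F" using assms(3) by blast
  have "?P c"
  proof (intro conjI allI)
    show "finite {i. c i \<noteq> 0}" using sub assms(1) finite_subset by blast
    show "c i \<in> A i" for i by (rule assms(2))
    have "(\<Sum>i\<in>{i. c i \<noteq> 0}. c i) = (\<Sum>i\<in>F. c i)"
      by (rule sum.mono_neutral_left) (use assms(1) sub in auto)
    then show "x = (\<Sum>i\<in>{i. c i \<noteq> 0}. c i)" using assms(4) by simp
  qed
  then have "(THE c. ?P c) = c" by (rule the1_equality[OF decomp[of x]])
  then show ?thesis by (simp add: hc_def)
qed

lemma hc_add: "hc n (x + y) = hc n x + hc n y"
proof -
  let ?F = "{i. hc i x \<noteq> 0} \<union> {i. hc i y \<noteq> 0}"
  have "x + y = (\<Sum>i\<in>?F. hc i x) + (\<Sum>i\<in>?F. hc i y)"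
    using hc_sum[of ?F x] hc_sum[of ?F y] hc_fin by auto
  also have "\<dots> = (\<Sum>i\<in>?F. hc i x + hc i y)" by (simp add: sum.distrib)
  finally show ?thesis
    by (intro hc_char) (auto simp: hc_fin subspace_add[OF subA] hc_in)
qed

lemma hc_scale: "hc n (sc c x) = sc c (hc n x)"
proof -
  let ?F = "{i. hc i x \<noteq> 0}"
  have "sc c x = sc c (\<Sum>i\<in>?F. hc i x)" using hc_sum[of ?F x] hc_fin by auto
  also have "\<dots> = (\<Sum>i\<in>?F. sc c (hc i x))" by (simp add: scale_sum_right)
  finally show ?thesis
    by (intro hc_char) (auto simp: hc_fin subspace_scale[OF subA] hc_in)
qed

lemma hc_linear: "Vector_Spaces.linear sc sc (hc n)"
  unfolding Vector_Spaces.linear_iff by (simp add: hc_add hc_scale vector_space_axioms)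

lemma hc_zero[simp]: "hc n 0 = 0"
  using hc_scale[of n 0 0] by simp

lemma hc_diff: "hc n (x - y) = hc n x - hc n y"
  using hc_add[of n "x - y" y] by simp

lemma hc_hom: "x \<in> A m \<Longrightarrow> hc n x = (if n = m then x else 0)"
  by (rule hc_char[of "{m}"]) auto

lemma hc_sumrep:
  assumes "finite F" "\<And>i. i \<in> F \<Longrightarrow> y i \<in> A i" "x = (\<Sum>i\<in>F. y i)"
  shows "hc n x = (if n \<in> F then y n else 0)"
  using assms by (intro hc_char[of F]) (auto intro!: sum.cong)

lemma hc_span_zero: "x \<in> span S \<Longrightarrow> (\<And>s. s \<in> S \<Longrightarrow> hc n s = 0) \<Longrightarrow> hc n x = 0"
  by (induction x rule: span_induct_alt) (auto simp: hc_add hc_scale)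

definition ge :: "nat \<Rightarrow> 'a set" where "ge n = span (\<Union>i\<in>{n..}. A i)"

lemma A_ge: "n \<le> i \<Longrightarrow> A i \<subseteq> ge n"
  unfolding ge_def using span_superset by fastforce

lemma ge_sub: "subspace (ge n)" by (simp add: ge_def)

lemma ge_iff: "x \<in> ge n \<longleftrightarrow> (\<forall>m<n. hc m x = 0)"
proof
  assume "x \<in> ge n"
  then show "\<forall>m<n. hc m x = 0"
    unfolding ge_def by (auto intro: hc_span_zero simp: hc_hom)
next
  assume h: "\<forall>m<n. hc m x = 0"
  have "x = (\<Sum>i\<in>{i. hc i x \<noteq> 0}. hc i x)" using hc_prop by blast
  also have "\<dots> \<in> ge n"
  proof (rule subspace_sum[OF ge_sub])
    fix i assume "i \<in> {i. hc i x \<noteq> 0}"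
    then have "hc i x \<noteq> 0" by simp
    with h have "\<not> i < n" by blast
    then have "n \<le> i" by simp
    then show "hc i x \<in> ge n" using A_ge hc_in by blast
  qed
  finally show "x \<in> ge n" .
qed

lemma ge_0[simp]: "ge 0 = UNIV" using ge_iff by auto

lemma ge_mono: "m \<le> n \<Longrightarrow> ge n \<subseteq> ge m" using ge_iff by auto

lemma span_mult:
  assumes "x \<in> span X" "y \<in> span Y"
  shows "x * y \<in> span {a * b | a b. a \<in> X \<and> b \<in> Y}"
proof -
  let ?P = "{a * b | a b. a \<in> X \<and> b \<in> Y}"
  have inner: "a * y \<in> span ?P" if "a \<in> X" for a
    using assms(2)
  proof (induction y rule: span_induct_alt)
    case base then show ?case by (simp add: span_zero)
  next
    case (step c b y)
    have "a * (sc c b + y) = sc c (a * b) + a * y" by (simp add: distrib_left scm(2))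
    moreover have "a * b \<in> span ?P" using step that by (auto intro: span_base)
    ultimately show ?case using step by (simp add: span_add span_scale)
  qed
  show ?thesis using assms(1)
  proof (induction x rule: span_induct_alt)
    case base then show ?case by (simp add: span_zero)
  next
    case (step c a x)
    have "(sc c a + x) * y = sc c (a * y) + x * y" by (simp add: distrib_right scm(1))
    then show ?case using step inner by (simp add: span_add span_scale)
  qed
qed

lemma ge_mult: "x \<in> ge m \<Longrightarrow> y \<in> ge n \<Longrightarrow> x * y \<in> ge (m + n)"
proof -
  assume "x \<in> ge m" "y \<in> ge n"
  then have "x * y \<in> span {a * b | a b. a \<in> (\<Union>i\<in>{m..}. A i) \<and> b \<in> (\<Union>i\<in>{n..}. A i)}"
    unfolding ge_def by (rule span_mult)
  also have "\<dots> \<subseteq> ge (m + n)"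
  proof (rule span_minimal[OF _ ge_sub])
    have *: "a * b \<in> ge (m + n)" if "a \<in> A i" "i \<in> {m..}" "b \<in> A j" "j \<in> {n..}" for a b i j
      using that mulA A_ge[of "m+n" "i+j"] by auto
    show "{a * b | a b. a \<in> (\<Union>i\<in>{m..}. A i) \<and> b \<in> (\<Union>i\<in>{n..}. A i)} \<subseteq> ge (m + n)"
      using * by blast
  qed
  finally show ?thesis .
qed

lemma hc_ge_high: "x \<in> ge n \<Longrightarrow> m < n \<Longrightarrow> hc m x = 0" using ge_iff by blast

lemma UNIV_span: "span (\<Union>i. A i) = UNIV"
proof -
  have "span (\<Union>i\<in>{0..}. A i) = UNIV" using ge_0 by (simp only: ge_def)
  then show ?thesis by simp
qed

end


definition Q :: "nat \<Rightarrow> 'a::monoid_mult set \<Rightarrow> 'a set" where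
  "Q n X = {prod_list xs | xs. set xs \<subseteq> X \<and> length xs = n}"

locale cgalg = galg +
  assumes conn: "connected_graded sc A" and gen1: "generated_in_degree_1 sc A"
begin

lemma A0: "A 0 = range (\<lambda>c. sc c 1)" using conn by (simp add: connected_graded_def)
lemma inj1: "inj (\<lambda>c. sc c 1)" using conn by (simp add: connected_graded_def)

lemma one_A0: "1 \<in> A 0"
proof -
  have "sc 1 1 \<in> A 0" using A0 by blast
  then show ?thesis by simp
qed

lemma one_ne0: "(1::'b) \<noteq> 0"
proof
  assume "(1::'b) = 0"
  then have "sc 1 1 = sc 0 1" by simp
  from injD[OF inj1 this] show False by simp
qed

lemma prodA: "set xs \<subseteq> A 1 \<Longrightarrow> prod_list xs \<in> A (length xs)"
proof (induction xs)
  case Nil then show ?case using one_A0 by simp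
next
  case (Cons x xs)
  then show ?case using mulA[of x 1 "prod_list xs" "length xs"] by simp
qed

lemma gen_span: "span (\<Union>k. Q k (A 1)) = UNIV"
proof -
  have "(\<Union>k. Q k (A 1)) = {prod_list xs | xs. set xs \<subseteq> A 1}" by (auto simp: Q_def)
  then show ?thesis using gen1 by (simp add: generated_in_degree_1_def)
qed

lemma hc_Q: "y \<in> span (\<Union>k. Q k (A 1)) \<Longrightarrow> hc i y \<in> span (Q i (A 1))"
proof (induction y rule: span_induct_alt)
  case base then show ?case by (simp add: span_zero)
next
  case (step c s y)
  then obtain k where k: "s \<in> Q k (A 1)" by blast
  then have "s \<in> A k" using prodA by (auto simp: Q_def)
  then have "hc i s \<in> span (Q i (A 1))" using k by (auto simp: hc_hom span_base span_zero)
  then show ?case using step by (simp add: hc_add hc_scale span_add span_scale)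
qed

lemma A_gen: "A i \<subseteq> span (Q i (A 1))"
proof
  fix x assume "x \<in> A i"
  then have "x = hc i x" by (simp add: hc_hom)
  moreover have "hc i x \<in> span (Q i (A 1))" using hc_Q gen_span by simp
  ultimately show "x \<in> span (Q i (A 1))" by simp
qed

lemma prod_ge: "set xs \<subseteq> ge 1 \<Longrightarrow> prod_list xs \<in> ge (length xs)"
proof (induction xs)
  case Nil then show ?case by simp
next
  case (Cons x xs)
  then show ?case using ge_mult[of x 1 "prod_list xs" "length xs"] by simp
qed

lemma A1_ge1: "A 1 \<subseteq> ge 1" using A_ge[of 1 1] by simp

lemma Q_regroup:
  assumes "1 \<le> n" "n \<le> i"
  shows "Q i (A 1) \<subseteq> Q n (ge 1)"
proof
  fix p assume "p \<in> Q i (A 1)"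
  then obtain xs where xs: "set xs \<subseteq> A 1" "length xs = i" "p = prod_list xs" by (auto simp: Q_def)
  define k where "k = i - n + 1"
  define ys where "ys = prod_list (take k xs) # drop k xs"
  have "prod_list ys = prod_list (take k xs) * prod_list (drop k xs)" by (simp add: ys_def)
  also have "\<dots> = prod_list (take k xs @ drop k xs)" by (simp only: prod_list.append)
  also have "\<dots> = prod_list xs" by simp
  finally have pe: "prod_list ys = p" using xs by simp
  have lk: "length (take k xs) = k" using xs assms by (simp add: k_def)
  have "set (take k xs) \<subseteq> A 1" using set_take_subset xs(1) by (rule order_trans)
  then have "prod_list (take k xs) \<in> A k" using prodA[of "take k xs"] lk by simp
  moreover have "1 \<le> k" by (simp add: k_def)
  ultimately have "prod_list (take k xs) \<in> ge 1" using A_ge[of 1 k] by blast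
  moreover have "set (drop k xs) \<subseteq> ge 1"
    using order_trans[OF set_drop_subset xs(1)] A1_ge1 by (rule order_trans)
  ultimately have "set ys \<subseteq> ge 1" by (simp add: ys_def)
  moreover have "length ys = n" using xs assms by (simp add: ys_def k_def)
  ultimately have "p = prod_list ys \<and> set ys \<subseteq> ge 1 \<and> length ys = n" using pe by simp
  then show "p \<in> Q n (ge 1)" unfolding Q_def by blast
qed

lemma ge_Q:
  assumes "1 \<le> n" shows "ge n = span (Q n (ge 1))"
proof
  show "ge n \<subseteq> span (Q n (ge 1))"
    unfolding ge_def[of n]
  proof (rule span_minimal)
    show "(\<Union>i\<in>{n..}. A i) \<subseteq> span (Q n (ge 1))"
    proof
      fix x assume "x \<in> (\<Union>i\<in>{n..}. A i)"
      then obtain i where "i \<in> {n..}" "x \<in> A i" by blast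
      then have "x \<in> span (Q i (A 1))" using A_gen by blast
      moreover have "span (Q i (A 1)) \<subseteq> span (Q n (ge 1))"
        using Q_regroup[OF assms, of i] \<open>i \<in> {n..}\<close> span_mono by auto
      ultimately show "x \<in> span (Q n (ge 1))" by blast
    qed
  qed simp
  show "span (Q n (ge 1)) \<subseteq> ge n"
  proof (rule span_minimal[OF _ ge_sub])
    show "Q n (ge 1) \<subseteq> ge n"
    proof
      fix p assume "p \<in> Q n (ge 1)"
      then obtain xs where "set xs \<subseteq> ge 1" "length xs = n" "p = prod_list xs" by (auto simp: Q_def)
      then show "p \<in> ge n" using prod_ge by blast
    qed
  qed
qed

lemma aug_eq: "aug_ideal sc A = ge 1" by (simp add: aug_ideal_def ge_def)

lemma ideal_ge1: "two_sided_ideal sc (ge 1)"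
  unfolding two_sided_ideal_def
  using ge_sub ge_mult[of _ 0 _ 1] ge_mult[of _ 1 _ 0] by simp

lemma sq_ge2: "ideal_square sc (ge 1) \<subseteq> ge 2"
  unfolding ideal_square_def
proof (rule span_minimal[OF _ ge_sub])
  have "x * y \<in> ge 2" if "x \<in> ge 1" "y \<in> ge 1" for x y
    using ge_mult[OF that] by (simp only: one_add_one)
  then show "{x * y | x y. x \<in> ge 1 \<and> y \<in> ge 1} \<subseteq> ge 2" by blast
qed

lemma ge2_sq: "ge 2 \<subseteq> ideal_square sc (ge 1)"
proof -
  have "Q 2 (ge 1) \<subseteq> {x * y | x y. x \<in> ge 1 \<and> y \<in> ge 1}"
  proof
    fix p assume "p \<in> Q 2 (ge 1)"
    then obtain xs where "set xs \<subseteq> ge 1" "length xs = 2" "p = prod_list xs" by (auto simp: Q_def)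
    then obtain a b where "xs = [a, b]"
      by (auto simp: numeral_2_eq_2 length_Suc_conv)
    then show "p \<in> {x * y | x y. x \<in> ge 1 \<and> y \<in> ge 1}" using \<open>set xs \<subseteq> ge 1\<close> \<open>p = _\<close> by auto
  qed
  then show ?thesis using ge_Q[of 2] span_mono unfolding ideal_square_def by auto
qed

lemma A0_span: "A 0 = span {1}" using A0 by (simp add: span_singleton)

lemma indep1: "independent {1}" using one_ne0 by simp

lemma dimA0: "dim (A 0) = 1"
  using dim_unique[of "{1}" "A 0" 1] A0_span indep1 span_superset by auto

lemma codim_ge1: "quot_dim_eq sc UNIV (ge 1) 1"
  unfolding quot_dim_eq_def
proof (intro conjI exI[of _ "A 0"])
  show "ge 1 \<inter> A 0 = {0}"
  proof
    show "ge 1 \<inter> A 0 \<subseteq> {0}"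
    proof
      fix x assume "x \<in> ge 1 \<inter> A 0"
      then have "hc 0 x = 0" "hc 0 x = x" using ge_iff[of x 1] hc_hom[of x 0 0] by auto
      then show "x \<in> {0}" by simp
    qed
  qed (simp add: subspace_0[OF ge_sub])
  show "{u + w | u w. u \<in> ge 1 \<and> w \<in> A 0} = UNIV"
  proof -
    have "x \<in> {u + w | u w. u \<in> ge 1 \<and> w \<in> A 0}" for x
    proof -
      have "hc 0 (x - hc 0 x) = 0" using hc_diff hc_hom[OF hc_in[of 0 x]] by simp
      then have "x - hc 0 x \<in> ge 1" using ge_iff by auto
      then show ?thesis using hc_in[of 0 x] by (intro CollectI exI[of _ "x - hc 0 x"] exI[of _ "hc 0 x"]) auto
    qed
    then show ?thesis by blast
  qed
  show "fin_dim sc (A 0)" unfolding fin_dim_def using A0_span by auto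
qed (auto simp: subA dimA0)

lemma tangent_ge1:
  assumes "fin_dim sc (A 1)"
  shows "quot_dim_eq sc (ge 1) (ideal_square sc (ge 1)) (dim (A 1))"
  unfolding quot_dim_eq_def
proof (intro conjI exI[of _ "A 1"])
  show "ideal_square sc (ge 1) \<subseteq> ge 1" using sq_ge2 ge_mono[of 1 2] by auto
  show "A 1 \<subseteq> ge 1" by (rule A1_ge1)
  show "ideal_square sc (ge 1) \<inter> A 1 = {0}"
  proof
    show "ideal_square sc (ge 1) \<inter> A 1 \<subseteq> {0}"
    proof
      fix x assume "x \<in> ideal_square sc (ge 1) \<inter> A 1"
      then have "hc 1 x = 0" "hc 1 x = x" using sq_ge2 ge_iff[of x 2] hc_hom[of x 1 1] by auto
      then show "x \<in> {0}" by simp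
    qed
  qed (simp add: ideal_square_def span_zero)
  show "{u + w | u w. u \<in> ideal_square sc (ge 1) \<and> w \<in> A 1} = ge 1"
  proof
    show "{u + w | u w. u \<in> ideal_square sc (ge 1) \<and> w \<in> A 1} \<subseteq> ge 1"
    proof clarify
      fix u w assume "u \<in> ideal_square sc (ge 1)" "w \<in> A 1"
      then have "u \<in> ge 1" "w \<in> ge 1" using sq_ge2 ge_mono[of 1 2] A1_ge1 by auto
      then show "u + w \<in> ge 1" using subspace_add[OF ge_sub] by blast
    qed
    show "ge 1 \<subseteq> {u + w | u w. u \<in> ideal_square sc (ge 1) \<and> w \<in> A 1}"
    proof
      fix x assume x: "x \<in> ge 1"
      have "x - hc 1 x \<in> ge 2"
      proof -
        have "\<forall>m<2. hc m (x - hc 1 x) = 0"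
        proof (intro allI impI)
          fix m :: nat assume "m < 2"
          then have "m = 0 \<or> m = 1" by auto
          then show "hc m (x - hc 1 x) = 0" using x ge_iff hc_diff hc_hom[OF hc_in[of 1 x]] by auto
        qed
        then show ?thesis using ge_iff by blast
      qed
      then have "x - hc 1 x \<in> ideal_square sc (ge 1)" using ge2_sq by blast
      then show "x \<in> {u + w | u w. u \<in> ideal_square sc (ge 1) \<and> w \<in> A 1}"
        using hc_in[of 1 x] by (intro CollectI exI[of _ "x - hc 1 x"] exI[of _ "hc 1 x"]) auto
    qed
  qed
qed (use assms in \<open>auto simp: subA\<close>)

lemma codim1_ge1: "fin_dim sc (A 1) \<Longrightarrow> codim1_ideal_tangent_dim sc (ge 1) (dim (A 1))"
  unfolding codim1_ideal_tangent_dim_def using ideal_ge1 codim_ge1 tangent_ge1 by blast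

end


context cgalg begin

lemma sc1_left: "sc c 1 * z = sc c z" using scm(1)[of c 1 z] by simp
lemma sc1_right: "z * sc c 1 = sc c z" using scm(2)[of c z 1] by simp

lemma tangent_bound:
  assumes fA1: "fin_dim sc (A 1)" and I: "two_sided_ideal sc I" and cd: "quot_dim_eq sc UNIV I 1"
    and W: "subspace W" "W \<subseteq> I" "ideal_square sc I \<inter> W \<subseteq> {0}"
  shows "fin_dim sc W \<and> dim W \<le> dim (A 1)"
proof -
  have Isub: "subspace I" and Imul: "\<And>r x. x \<in> I \<Longrightarrow> r * x \<in> I \<and> x * r \<in> I"
    using I unfolding two_sided_ideal_def by auto
  obtain W0 where W0: "subspace W0" "I \<inter> W0 = {0}" "{u + w | u w. u \<in> I \<and> w \<in> W0} = UNIV" "dim W0 = 1"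
    using cd unfolding quot_dim_eq_def by blast
  have one_notin: "1 \<notin> I"
  proof
    assume "1 \<in> I"
    then have "r * 1 \<in> I" for r using Imul[of 1 r] by blast
    then have "r \<in> I" for r by simp
    then have "W0 \<subseteq> span {}" using W0(2) by auto
    from dim_le_card[OF this] have "dim W0 \<le> card {}" by simp
    then show False using W0(4) by simp
  qed
  obtain B0 where B0: "B0 \<subseteq> W0" "independent B0" "W0 \<subseteq> span B0" "card B0 = dim W0" by (rule basis_exists)
  then have "card B0 = 1" using W0(4) by simp
  then obtain w where "B0 = {w}" by (rule card_1_singletonE)
  then have W0w: "W0 \<subseteq> range (\<lambda>c. sc c w)" using B0 span_singleton by auto
  have dec0: "\<exists>i c. i \<in> I \<and> r = i + sc c w" for r
  proof -
    have "r \<in> {u + w | u w. u \<in> I \<and> w \<in> W0}" using W0(3) by blast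
    then obtain i v where "i \<in> I" "v \<in> W0" "r = i + v" by blast
    moreover obtain c where "v = sc c w" using W0w \<open>v \<in> W0\<close> by blast
    ultimately show ?thesis by blast
  qed
  obtain i1 c1 where i1: "i1 \<in> I" "1 = i1 + sc c1 w" using dec0 by blast
  have c1: "c1 \<noteq> 0"
  proof
    assume "c1 = 0"
    then have "1 = i1" using i1 by simp
    then show False using i1 one_notin by simp
  qed
  have decomp: "\<exists>i c. i \<in> I \<and> r = i + sc c 1" for r
  proof -
    obtain i c where ic: "i \<in> I" "r = i + sc c w" using dec0 by blast
    have "sc c1 w = 1 - i1" using i1 by (simp add: algebra_simps)
    then have "sc (c / c1) (1 - i1) = sc (c / c1 * c1) w" by (metis scale_scale)
    also have "\<dots> = sc c w" using c1 by simp
    finally have "r = (i - sc (c / c1) i1) + sc (c / c1) 1" using ic by (simp add: scale_right_diff_distrib)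
    moreover have "i - sc (c / c1) i1 \<in> I" using ic(1) i1(1) Isub by (simp add: subspace_diff subspace_scale)
    ultimately show ?thesis by blast
  qed
  obtain S0 where S0: "finite S0" "span S0 = A 1" using fA1 unfolding fin_dim_def by blast
  obtain T where T: "T \<subseteq> A 1" "independent T" "A 1 \<subseteq> span T" "card T = dim (A 1)" by (rule basis_exists)
  have fT: "finite T" using independent_span_bound[OF S0(1) T(2)] T(1) S0(2) by blast
  have "\<forall>t. \<exists>c. t - sc c 1 \<in> I"
  proof
    fix t obtain i c where "i \<in> I" "t = i + sc c 1" using decomp by blast
    then show "\<exists>c. t - sc c 1 \<in> I" by (intro exI[of _ c]) simp
  qed
  then obtain cf where cf: "\<And>t. t - sc (cf t) 1 \<in> I" by metis
  define Phi where "Phi = (\<lambda>t. t - sc (cf t) 1) ` T"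
  have fPhi: "finite Phi" using fT by (simp add: Phi_def)
  have cPhi: "card Phi \<le> card T" unfolding Phi_def by (rule card_image_le[OF fT])
  have spPhi: "span Phi \<subseteq> I" using cf Isub by (intro span_minimal) (auto simp: Phi_def)
  have T1: "T \<subseteq> span (Phi \<union> {1})"
  proof
    fix t assume "t \<in> T"
    then have a: "t - sc (cf t) 1 \<in> span (Phi \<union> {1})" by (intro span_base) (auto simp: Phi_def)
    have b: "sc (cf t) 1 \<in> span (Phi \<union> {1})" by (intro span_scale span_base) simp
    have "(t - sc (cf t) 1) + sc (cf t) 1 \<in> span (Phi \<union> {1})" using a b by (rule span_add)
    then show "t \<in> span (Phi \<union> {1})" by simp
  qed
  have A1sp: "A 1 \<subseteq> span (Phi \<union> {1})"
    using T(3) span_minimal[OF T1 subspace_span] by blast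
  define I2 where "I2 = ideal_square sc I"
  have I2sub: "subspace I2" by (simp add: I2_def ideal_square_def)
  have I2I: "I2 \<subseteq> I"
    unfolding I2_def ideal_square_def using Imul by (intro span_minimal[OF _ Isub]) auto
  have prodI2: "x \<in> I \<Longrightarrow> y \<in> I \<Longrightarrow> x * y \<in> I2" for x y
    unfolding I2_def ideal_square_def by (intro span_base) blast
  define M where "M = {q + s + sc e 1 | q s e. q \<in> I2 \<and> s \<in> span Phi}"
  have M0: "0 \<in> M" unfolding M_def using subspace_0[OF I2sub] span_zero
    by (intro CollectI exI[of _ 0] exI[of _ 0] exI[of _ "0::'a"]) auto
  have Madd: "x + y \<in> M" if hx: "x \<in> M" and hy: "y \<in> M" for x y
  proof -
    obtain q s e where 1: "q \<in> I2" "s \<in> span Phi" "x = q + s + sc e 1" using hx M_def by blast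
    obtain q' s' e' where 2: "q' \<in> I2" "s' \<in> span Phi" "y = q' + s' + sc e' 1" using hy M_def by blast
    have "x + y = (q + q') + (s + s') + sc (e + e') 1" using 1 2 by (simp add: scale_left_distrib algebra_simps)
    moreover have "q + q' \<in> I2" using 1 2 I2sub by (simp add: subspace_add)
    moreover have "s + s' \<in> span Phi" using 1 2 by (simp add: span_add)
    ultimately show ?thesis unfolding M_def by blast
  qed
  have Mscale: "sc c x \<in> M" if hx: "x \<in> M" for c x
  proof -
    obtain q s e where 1: "q \<in> I2" "s \<in> span Phi" "x = q + s + sc e 1" using hx M_def by blast
    have "sc c x = sc c q + sc c s + sc (c * e) 1" using 1 by (simp add: scale_right_distrib)
    moreover have "sc c q \<in> I2" using 1 I2sub by (simp add: subspace_scale)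
    moreover have "sc c s \<in> span Phi" using 1 by (simp add: span_scale)
    ultimately show ?thesis unfolding M_def by blast
  qed
  have prodM: "set xs \<subseteq> A 1 \<Longrightarrow> prod_list xs \<in> M" for xs
  proof (induction xs)
    case Nil
    have "(1::'b) = 0 + 0 + sc 1 1" by simp
    show ?case unfolding M_def
      by (intro CollectI exI[of _ 0] exI[of _ 0] exI[of _ 1]) (simp add: subspace_0[OF I2sub] span_zero)
  next
    case (Cons x xs)
    then obtain q s e where 1: "q \<in> I2" "s \<in> span Phi" "prod_list xs = q + s + sc e 1"
      using M_def by auto
    have "x \<in> span (Phi \<union> {1})" using Cons.prems A1sp by auto
    then obtain a b where ab: "a \<in> span Phi" "b \<in> span {1}" "x = a + b"
      unfolding span_Un[of Phi "{1}"] by blast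
    then obtain c where "b = sc c 1" by (auto simp: span_singleton)
    then have xe: "x = a + sc c 1" using ab by simp
    have "prod_list (x # xs) = (a + sc c 1) * (q + s + sc e 1)" using xe 1 by simp
    also have "\<dots> = (a * q + a * s + sc c q) + (sc e a + sc c s) + sc (c * e) 1"
      by (simp add: distrib_left distrib_right sc1_left sc1_right algebra_simps)
    finally have eq: "prod_list (x # xs) = (a * q + a * s + sc c q) + (sc e a + sc c s) + sc (c * e) 1" .
    have aI: "a \<in> I" using ab spPhi by blast
    have "a * q \<in> I2" using prodI2 aI I2I 1 by blast
    moreover have "a * s \<in> I2" using prodI2 aI spPhi 1 by blast
    moreover have "sc c q \<in> I2" using 1 I2sub by (simp add: subspace_scale)
    ultimately have "a * q + a * s + sc c q \<in> I2" using I2sub by (simp add: subspace_add)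
    moreover have "sc e a + sc c s \<in> span Phi" using ab 1 by (simp add: span_add span_scale)
    ultimately show ?case using eq unfolding M_def by blast
  qed
  have allM: "x \<in> M" for x
  proof -
    have "x \<in> span (\<Union>k. Q k (A 1))" using gen_span by simp
    then show ?thesis
    proof (induction x rule: span_induct_alt)
      case base then show ?case by (rule M0)
    next
      case (step c p y)
      then obtain k where "p \<in> Q k (A 1)" by blast
      then have "p \<in> M" using prodM by (auto simp: Q_def)
      then show ?case using step Madd Mscale by blast
    qed
  qed
  have cov: "I \<subseteq> {u + s | u s. u \<in> I2 \<and> s \<in> span Phi}"
  proof
    fix x assume xI: "x \<in> I"
    obtain q s e where 1: "q \<in> I2" "s \<in> span Phi" "x = q + s + sc e 1" using allM[of x] M_def by blast
    have "q + s \<in> I" using 1 I2I spPhi Isub by (meson subsetD subspace_add)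
    then have "sc e 1 \<in> I" using xI 1 Isub subspace_diff[OF Isub xI \<open>q + s \<in> I\<close>] by simp
    have "e = 0"
    proof (rule ccontr)
      assume "e \<noteq> 0"
      then have "sc (1 / e) (sc e 1) = 1" by simp
      then have "1 \<in> I" using \<open>sc e 1 \<in> I\<close> subspace_scale[OF Isub] by metis
      then show False using one_notin by simp
    qed
    then show "x \<in> {u + s | u s. u \<in> I2 \<and> s \<in> span Phi}" using 1 by auto
  qed
  have "fin_dim sc W \<and> dim W \<le> card Phi"
  proof (rule compl_bound[OF I2sub W(1) _ _ fPhi])
    show "I2 \<inter> W \<subseteq> {0}" using W(3) by (simp add: I2_def)
    show "W \<subseteq> {u + s | u s. u \<in> I2 \<and> s \<in> span Phi}" using W(2) cov by blast
  qed
  then show ?thesis using cPhi T(4) by simp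
qed

end


locale aiso =
  fixes s1 :: "'k::field \<Rightarrow> 'a::ring_1 \<Rightarrow> 'a" and s2 :: "'k \<Rightarrow> 'b::ring_1 \<Rightarrow> 'b" and f :: "'a \<Rightarrow> 'b"
  assumes vs1: "vector_space s1" and vs2: "vector_space s2" and iso: "algebra_iso s1 s2 f"
begin

lemma bijf: "bij f" and fadd: "f (x + y) = f x + f y" and fsc: "f (s1 c x) = s2 c (f x)"
  and fmul: "f (x * y) = f x * f y" and f1: "f 1 = 1"
  using iso unfolding algebra_iso_def by auto

sublocale module_hom s1 s2 f
  using vs1 vs2 fadd fsc unfolding module_hom_iff by (simp add: module_iff_vector_space)

interpretation v1: vector_space s1 by (rule vs1)
interpretation v2: vector_space s2 by (rule vs2)

lemma injf: "inj f" using bijf bij_is_inj by blast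
lemma surjf: "surj f" using bijf bij_is_surj by blast

lemma finvf[simp]: "inv f (f x) = x" using injf by simp
lemma ffinv[simp]: "f (inv f y) = y" using surjf by (simp add: surj_f_inv_f)

lemma inv_iso: "algebra_iso s2 s1 (inv f)"
  unfolding algebra_iso_def
proof (intro conjI allI)
  show "bij (inv f)" using bijf by (rule bij_imp_bij_inv)
  fix x y c
  show "inv f (x + y) = inv f x + inv f y"
    by (metis fadd ffinv finvf)
  show "inv f (s2 c x) = s1 c (inv f x)"
    by (metis fsc ffinv finvf)
  show "inv f (x * y) = inv f x * inv f y"
    by (metis fmul ffinv finvf)
next
  show "inv f 1 = 1" by (metis f1 finvf)
qed

lemma img_int: "f ` (X \<inter> Y) = f ` X \<inter> f ` Y" using injf by (simp add: image_Int)

lemma ideal_img: "two_sided_ideal s1 I \<Longrightarrow> two_sided_ideal s2 (f ` I)"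
  unfolding two_sided_ideal_def
proof (intro conjI allI impI)
  assume h: "m1.subspace I \<and> (\<forall>r x. x \<in> I \<longrightarrow> r * x \<in> I \<and> x * r \<in> I)"
  then show "m2.subspace (f ` I)" using subspace_image by blast
  fix r x assume "x \<in> f ` I"
  then obtain x' where x': "x' \<in> I" "x = f x'" by blast
  have "r * x = f (inv f r * x')" using x' by (simp add: fmul)
  then show "r * x \<in> f ` I" using h x' by blast
  have "x * r = f (x' * inv f r)" using x' by (simp add: fmul)
  then show "x * r \<in> f ` I" using h x' by blast
qed

lemma prods_img: "f ` {x * y | x y. x \<in> I \<and> y \<in> I} = {x * y | x y. x \<in> f ` I \<and> y \<in> f ` I}"
proof
  show "f ` {x * y | x y. x \<in> I \<and> y \<in> I} \<subseteq> {x * y | x y. x \<in> f ` I \<and> y \<in> f ` I}"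
    by (auto simp: fmul) blast
  show "{x * y | x y. x \<in> f ` I \<and> y \<in> f ` I} \<subseteq> f ` {x * y | x y. x \<in> I \<and> y \<in> I}"
  proof clarify
    fix a b assume "a \<in> I" "b \<in> I"
    then show "f a * f b \<in> f ` {x * y | x y. x \<in> I \<and> y \<in> I}"
      by (intro image_eqI[of _ _ "a * b"]) (auto simp: fmul)
  qed
qed

lemma sq_img: "ideal_square s2 (f ` I) = f ` ideal_square s1 I"
  unfolding ideal_square_def by (simp add: span_image[symmetric] prods_img)

lemma dim_img: "v2.dim (f ` W) = v1.dim W"
proof -
  obtain B where B: "B \<subseteq> W" "m1.independent B" "W \<subseteq> m1.span B" "card B = v1.dim W"
    by (rule v1.basis_exists)
  have "inj_on f (m1.span B)" using injf inj_on_subset by blast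
  then have ind: "m2.independent (f ` B)" using B(2) independent_injective_image by blast
  have "f ` W \<subseteq> f ` m1.span B" using B(3) by blast
  then have sp: "f ` W \<subseteq> m2.span (f ` B)" by (simp add: span_image)
  have "card (f ` B) = card B" using injf card_image inj_on_subset by blast
  then show ?thesis using v2.dim_unique[of "f ` B" "f ` W"] B ind sp by auto
qed

lemma fin_dim_img: "fin_dim s1 W \<Longrightarrow> fin_dim s2 (f ` W)"
  unfolding fin_dim_def using span_image by (metis finite_imageI)

lemma sums_img: "f ` {u + w | u w. u \<in> U \<and> w \<in> W} = {u + w | u w. u \<in> f ` U \<and> w \<in> f ` W}"
proof
  show "f ` {u + w | u w. u \<in> U \<and> w \<in> W} \<subseteq> {u + w | u w. u \<in> f ` U \<and> w \<in> f ` W}"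
    by (auto simp: fadd) blast
  show "{u + w | u w. u \<in> f ` U \<and> w \<in> f ` W} \<subseteq> f ` {u + w | u w. u \<in> U \<and> w \<in> W}"
  proof clarify
    fix a b assume "a \<in> U" "b \<in> W"
    then show "f a + f b \<in> f ` {u + w | u w. u \<in> U \<and> w \<in> W}"
      by (intro image_eqI[of _ _ "a + b"]) (auto simp: fadd)
  qed
qed

lemma quot_img: "quot_dim_eq s1 V U n \<Longrightarrow> quot_dim_eq s2 (f ` V) (f ` U) n"
  unfolding quot_dim_eq_def
proof (elim conjE exE, intro conjI exI)
  fix W assume h: "U \<subseteq> V" "m1.subspace W" "W \<subseteq> V" "U \<inter> W = {0}"
    "{u + w | u w. u \<in> U \<and> w \<in> W} = V" "fin_dim s1 W" "v1.dim W = n"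
  show "f ` U \<subseteq> f ` V" using h by blast
  show "m2.subspace (f ` W)" using h subspace_image by blast
  show "f ` W \<subseteq> f ` V" using h by blast
  show "f ` U \<inter> f ` W = {0}" using h img_int[of U W] by simp
  show "{u + w | u w. u \<in> f ` U \<and> w \<in> f ` W} = f ` V" using h sums_img[of U W] by simp
  show "fin_dim s2 (f ` W)" using h fin_dim_img by blast
  show "v2.dim (f ` W) = n" using h dim_img by simp
qed

lemma codim_img: "codim1_ideal_tangent_dim s1 I n \<Longrightarrow> codim1_ideal_tangent_dim s2 (f ` I) n"
  unfolding codim1_ideal_tangent_dim_def
  using ideal_img quot_img[of UNIV I 1] quot_img[of I "ideal_square s1 I" n] sq_img surjf
  by auto

lemma Q_img: "f ` Q n X = Q n (f ` X)"
proof
  have pl: "f (prod_list xs) = prod_list (map f xs)" for xs by (induction xs) (auto simp: fmul f1)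
  show "f ` Q n X \<subseteq> Q n (f ` X)" unfolding Q_def
  proof clarify
    fix xs assume "set xs \<subseteq> X"
    then show "\<exists>ys. f (prod_list xs) = prod_list ys \<and> set ys \<subseteq> f ` X \<and> length ys = length xs"
      by (intro exI[of _ "map f xs"]) (auto simp: pl)
  qed
  show "Q n (f ` X) \<subseteq> f ` Q n X" unfolding Q_def
  proof clarify
    fix ys assume ys: "set ys \<subseteq> f ` X" "n = length ys"
    let ?xs = "map (inv f) ys"
    have "map f ?xs = ys" by (induction ys) auto
    then have "prod_list ys = f (prod_list ?xs)" by (simp add: pl)
    moreover have "set ?xs \<subseteq> X" using ys(1) by auto
    moreover have "length ?xs = length ys" by simp
    ultimately show "prod_list ys \<in> f ` {prod_list xs |xs. set xs \<subseteq> X \<and> length xs = length ys}"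
      by (intro image_eqI[of _ _ "prod_list ?xs"]) blast+
  qed
qed

end


locale giso = GA: cgalg scA A + GB: cgalg scB B + F: aiso scA scB f
  for scA :: "'k::field \<Rightarrow> 'a::ring_1 \<Rightarrow> 'a" and A and scB :: "'k \<Rightarrow> 'b::ring_1 \<Rightarrow> 'b" and B and f +
  assumes aug: "f ` GA.ge 1 = GB.ge 1"
begin

lemma f_ge: "f ` GA.ge n = GB.ge n"
proof (cases "n = 0")
  case True then show ?thesis using F.surjf by simp
next
  case False
  then have n: "1 \<le> n" by simp
  have "f ` GA.ge n = f ` GA.span (Q n (GA.ge 1))" using GA.ge_Q[OF n] by simp
  also have "\<dots> = GB.span (f ` Q n (GA.ge 1))" by (simp add: F.span_image)
  also have "\<dots> = GB.span (Q n (f ` GA.ge 1))" by (simp only: F.Q_img)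
  also have "\<dots> = GB.span (Q n (GB.ge 1))" by (simp only: aug)
  also have "\<dots> = GB.ge n" using GB.ge_Q[OF n] by simp
  finally show ?thesis .
qed

lemma f_ge_mem: "x \<in> GA.ge n \<longleftrightarrow> f x \<in> GB.ge n"
  using f_ge[of n] F.injf by (metis image_eqI inj_image_mem_iff)

definition g :: "'a \<Rightarrow> 'b" where
  "g x = (\<Sum>i\<in>{i. GA.hc i x \<noteq> 0}. GB.hc i (f (GA.hc i x)))"

lemma g_sum: assumes "finite F" "{i. GA.hc i x \<noteq> 0} \<subseteq> F"
  shows "g x = (\<Sum>i\<in>F. GB.hc i (f (GA.hc i x)))"
  unfolding g_def by (rule sum.mono_neutral_left) (use assms in auto)

lemma g_add: "g (x + y) = g x + g y"
proof -
  let ?F = "{i. GA.hc i x \<noteq> 0} \<union> {i. GA.hc i y \<noteq> 0} \<union> {i. GA.hc i (x + y) \<noteq> 0}"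
  have fin: "finite ?F" using GA.hc_fin by simp
  have "g (x + y) = (\<Sum>i\<in>?F. GB.hc i (f (GA.hc i (x + y))))" by (rule g_sum[OF fin]) auto
  also have "\<dots> = (\<Sum>i\<in>?F. GB.hc i (f (GA.hc i x)) + GB.hc i (f (GA.hc i y)))"
    by (simp add: GA.hc_add F.fadd GB.hc_add)
  also have "\<dots> = (\<Sum>i\<in>?F. GB.hc i (f (GA.hc i x))) + (\<Sum>i\<in>?F. GB.hc i (f (GA.hc i y)))"
    by (simp add: sum.distrib)
  also have "\<dots> = g x + g y"
  proof -
    have "g x = (\<Sum>i\<in>?F. GB.hc i (f (GA.hc i x)))" by (rule g_sum[OF fin]) auto
    moreover have "g y = (\<Sum>i\<in>?F. GB.hc i (f (GA.hc i y)))" by (rule g_sum[OF fin]) auto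
    ultimately show ?thesis by simp
  qed
  finally show ?thesis .
qed

lemma g_scale: "g (scA c x) = scB c (g x)"
proof -
  let ?F = "{i. GA.hc i x \<noteq> 0} \<union> {i. GA.hc i (scA c x) \<noteq> 0}"
  have fin: "finite ?F" using GA.hc_fin by simp
  have "g (scA c x) = (\<Sum>i\<in>?F. GB.hc i (f (GA.hc i (scA c x))))" by (rule g_sum[OF fin]) auto
  also have "\<dots> = (\<Sum>i\<in>?F. scB c (GB.hc i (f (GA.hc i x))))"
    by (simp add: GA.hc_scale F.fsc GB.hc_scale)
  also have "\<dots> = scB c (\<Sum>i\<in>?F. GB.hc i (f (GA.hc i x)))"
    by (simp add: GB.scale_sum_right)
  also have "\<dots> = scB c (g x)"
  proof -
    have "g x = (\<Sum>i\<in>?F. GB.hc i (f (GA.hc i x)))" by (rule g_sum[OF fin]) auto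
    then show ?thesis by simp
  qed
  finally show ?thesis .
qed

lemma g_zero[simp]: "g 0 = 0" using g_scale[of 0 0] by simp

lemma g_hom: "x \<in> A n \<Longrightarrow> g x = GB.hc n (f x)"
proof -
  assume x: "x \<in> A n"
  have "g x = (\<Sum>i\<in>{n}. GB.hc i (f (GA.hc i x)))" by (rule g_sum) (auto simp: GA.hc_hom[OF x])
  then show ?thesis by (simp add: GA.hc_hom[OF x])
qed

lemma g_in: "x \<in> A n \<Longrightarrow> g x \<in> B n" using g_hom GB.hc_in by simp

lemma f_minus_g: assumes x: "x \<in> A n" shows "f x - g x \<in> GB.ge (Suc n)"
proof -
  have fx: "f x \<in> GB.ge n" using x GA.A_ge[of n n] f_ge_mem by blast
  have "\<forall>m < Suc n. GB.hc m (f x - g x) = 0"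
  proof (intro allI impI)
    fix m assume "m < Suc n"
    then consider "m < n" | "m = n" by linarith
    then show "GB.hc m (f x - g x) = 0"
    proof cases
      case 1
      then show ?thesis using fx GB.ge_iff GB.hc_diff g_hom[OF x] GB.hc_hom[OF GB.hc_in[of n "f x"]] by auto
    next
      case 2
      then show ?thesis using GB.hc_diff g_hom[OF x] GB.hc_hom[OF GB.hc_in[of n "f x"]] by auto
    qed
  qed
  then show ?thesis using GB.ge_iff by blast
qed

lemma g_mult_hom:
  assumes x: "x \<in> A n" and y: "y \<in> A m"
  shows "g (x * y) = g x * g y"
proof -
  define r where "r = f x - g x"
  define s where "s = f y - g y"
  have r: "r \<in> GB.ge (n + 1)" using f_minus_g[OF x] by (simp add: r_def)
  have s: "s \<in> GB.ge (m + 1)" using f_minus_g[OF y] by (simp add: s_def)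
  have gx: "g x \<in> GB.ge n" using g_in[OF x] GB.A_ge[of n n] by blast
  have gy: "g y \<in> GB.ge m" using g_in[OF y] GB.A_ge[of m m] by blast
  have "f (x * y) = (g x + r) * (g y + s)" by (simp add: r_def s_def F.fmul)
  then have e: "f (x * y) - g x * g y = g x * s + r * g y + r * s"
    by (simp add: algebra_simps)
  have "g x * s \<in> GB.ge (n + m + 1)" using GB.ge_mult[OF gx s] by (simp add: add.assoc)
  moreover have "r * g y \<in> GB.ge (n + m + 1)" using GB.ge_mult[OF r gy] by (simp add: ac_simps)
  moreover have "r * s \<in> GB.ge (n + m + 1)"
    using GB.ge_mult[OF r s] GB.ge_mono[of "n + m + 1" "n + 1 + (m + 1)"] by auto
  ultimately have d: "f (x * y) - g x * g y \<in> GB.ge (n + m + 1)"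
    using e GB.subspace_add[OF GB.ge_sub] by presburger
  have xy: "x * y \<in> A (n + m)" using GA.mulA[OF x y] .
  have gg: "g x * g y \<in> B (n + m)" using GB.mulA[OF g_in[OF x] g_in[OF y]] .
  have "g (x * y) = GB.hc (n + m) (f (x * y))" using g_hom[OF xy] .
  also have "\<dots> = GB.hc (n + m) (g x * g y) + GB.hc (n + m) (f (x * y) - g x * g y)"
    by (simp add: GB.hc_diff)
  also have "\<dots> = g x * g y" using GB.hc_hom[OF gg] GB.ge_iff d by simp
  finally show ?thesis .
qed

lemma g_mult: "g (x * y) = g x * g y"
proof -
  have hom_left: "g (x * y) = g x * g y" if y: "y \<in> A m" for x y m
  proof -
    have "x \<in> GA.span (\<Union>i. A i)" using GA.UNIV_span by simp
    then show ?thesis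
    proof (induction x rule: GA.span_induct_alt)
      case base then show ?case by simp
    next
      case (step c a x)
      then obtain n where a: "a \<in> A n" by blast
      have "g ((scA c a + x) * y) = g (scA c (a * y) + x * y)" by (simp add: distrib_right GA.scm(1))
      also have "\<dots> = scB c (g a * g y) + g x * g y"
        using g_mult_hom[OF a y] step by (simp add: g_add g_scale)
      also have "\<dots> = g (scA c a + x) * g y" by (simp add: g_add g_scale distrib_right GB.scm(1))
      finally show ?case .
    qed
  qed
  have "y \<in> GA.span (\<Union>i. A i)" using GA.UNIV_span by simp
  then show ?thesis
  proof (induction y rule: GA.span_induct_alt)
    case base then show ?case by simp
  next
    case (step c a y)
    then obtain n where a: "a \<in> A n" by blast
    have "g (x * (scA c a + y)) = g (scA c (x * a) + x * y)" by (simp add: distrib_left GA.scm(2))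
    also have "\<dots> = scB c (g x * g a) + g x * g y"
      using hom_left[OF a] step by (simp add: g_add g_scale)
    also have "\<dots> = g x * g (scA c a + y)" by (simp add: g_add g_scale distrib_left GB.scm(2))
    finally show ?case .
  qed
qed

lemma g_one: "g 1 = 1"
  using g_hom[OF GA.one_A0] F.f1 GB.hc_hom[OF GB.one_A0] by simp

lemma g_hom_zero: assumes z: "z \<in> A n" and gz: "g z = 0" shows "z = 0"
proof -
  have "f z \<in> GB.ge (Suc n)" using f_minus_g[OF z] gz by simp
  then have "z \<in> GA.ge (Suc n)" using f_ge_mem by blast
  then have "GA.hc n z = 0" using GA.ge_iff by blast
  then show ?thesis using GA.hc_hom[OF z] by simp
qed

lemma g_hc: "GB.hc n (g x) = g (GA.hc n x)"
proof -
  let ?F = "{i. GA.hc i x \<noteq> 0}"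
  have "g x = (\<Sum>i\<in>?F. g (GA.hc i x))" unfolding g_def[of x]
    by (rule sum.cong[OF refl]) (rule g_hom[OF GA.hc_in, symmetric])
  then have "GB.hc n (g x) = (if n \<in> ?F then g (GA.hc n x) else 0)"
    by (intro GB.hc_sumrep) (auto simp: GA.hc_fin g_in GA.hc_in)
  then show ?thesis by auto
qed

lemma g_inj: "inj g"
proof (rule injI)
  fix x y assume "g x = g y"
  then have "g (x - y) = 0" using g_add[of "x - y" y] by simp
  then have "g (GA.hc n (x - y)) = 0" for n using g_hc[of n "x - y"] by simp
  then have "GA.hc n (x - y) = 0" for n using g_hom_zero GA.hc_in by blast
  then have "x - y = 0" using GA.hc_sum[of "{}" "x - y"] by simp
  then show "x = y" by simp
qed

lemma g_onto: assumes y: "y \<in> B n" shows "y \<in> g ` A n"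
proof -
  define x0 where "x0 = inv f y"
  have "y \<in> GB.ge n" using y GB.A_ge[of n n] by blast
  then have x0: "x0 \<in> GA.ge n" using f_ge_mem by (simp add: x0_def)
  define x where "x = GA.hc n x0"
  have x: "x \<in> A n" by (simp add: x_def GA.hc_in)
  have "x0 - x \<in> GA.ge (Suc n)"
  proof -
    have "\<forall>m < Suc n. GA.hc m (x0 - x) = 0"
    proof (intro allI impI)
      fix m assume "m < Suc n"
      then consider "m < n" | "m = n" by linarith
      then show "GA.hc m (x0 - x) = 0"
      proof cases
        case 1 then show ?thesis using x0 GA.ge_iff GA.hc_diff GA.hc_hom[OF x] by auto
      next
        case 2 then show ?thesis using GA.hc_diff GA.hc_hom[OF x] by (simp add: x_def)
      qed
    qed
    then show ?thesis using GA.ge_iff by blast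
  qed
  then have d: "f (x0 - x) \<in> GB.ge (Suc n)" using f_ge_mem by blast
  have "f x = y - f (x0 - x)" by (simp add: F.diff x0_def)
  then have "g x = GB.hc n y - GB.hc n (f (x0 - x))" using g_hom[OF x] by (simp add: GB.hc_diff)
  also have "\<dots> = y" using GB.hc_hom[OF y] d GB.ge_iff by simp
  finally show ?thesis using x by blast
qed

lemma g_img: "g ` A n = B n" using g_in g_onto by blast

lemma g_surj: "surj g"
proof -
  have sub: "GB.subspace (range g)"
    unfolding GB.subspace_def
  proof (intro conjI ballI allI)
    show "0 \<in> range g" using g_zero rangeI[of g 0] by simp
    fix x y assume "x \<in> range g" "y \<in> range g"
    then obtain a b where "x = g a" "y = g b" by blast
    then have "x + y = g (a + b)" by (simp add: g_add)
    then show "x + y \<in> range g" by simp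
  next
    fix c x assume "x \<in> range g"
    then obtain a where "x = g a" by blast
    then have "scB c x = g (scA c a)" by (simp add: g_scale)
    then show "scB c x \<in> range g" by simp
  qed
  have "(\<Union>n. B n) \<subseteq> range g" using g_img by blast
  then have "GB.span (\<Union>n. B n) \<subseteq> range g" using GB.span_minimal sub by blast
  then show ?thesis using GB.UNIV_span by auto
qed

lemma graded_iso: "graded_algebra_iso scA A scB B g"
  unfolding graded_algebra_iso_def algebra_iso_def
  using g_inj g_surj g_add g_scale g_mult g_one g_img by (simp add: bij_def)

end


context cgalg begin
lemma sq_cap_A1: "ideal_square sc (ge 1) \<inter> A 1 \<subseteq> {0}"
proof
  fix x assume "x \<in> ideal_square sc (ge 1) \<inter> A 1"
  then have "hc 1 x = 0" "hc 1 x = x" using sq_ge2 ge_iff[of x 2] hc_hom[of x 1 1] by auto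
  then show "x \<in> {0}" by simp
qed
end

theorem lemma1p2:
  fixes scA :: "'k::field \<Rightarrow> 'a::ring_1 \<Rightarrow> 'a" and A :: "nat \<Rightarrow> 'a set"
    and scB :: "'k \<Rightarrow> 'b::ring_1 \<Rightarrow> 'b" and B :: "nat \<Rightarrow> 'b set"
    and d :: nat
  assumes "connected_graded scA A" and "generated_in_degree_1 scA A"
    and "connected_graded scB B" and "generated_in_degree_1 scB B"
    and "fin_dim scA (A 1)" and "d = Vector_Spaces.vector_space.dim scA (A 1)"
    and "codim1_ideal_tangent_dim scA (aug_ideal scA A) d"
    and "\<forall>I. codim1_ideal_tangent_dim scA I d \<longrightarrow> I = aug_ideal scA A"
    and "\<exists>f. algebra_iso scA scB f"
  shows "\<exists>g. graded_algebra_iso scA A scB B g"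
proof -
  have cA: "cgalg scA A" using assms(1,2)
    by (simp add: cgalg_def cgalg_axioms_def galg_def connected_graded_def)
  have cB: "cgalg scB B" using assms(3,4)
    by (simp add: cgalg_def cgalg_axioms_def galg_def connected_graded_def)
  interpret GA: cgalg scA A by (rule cA)
  interpret GB: cgalg scB B by (rule cB)
  obtain f where f: "algebra_iso scA scB f" using assms(9) by blast
  have aF: "aiso scA scB f"
    using f GA.vector_space_axioms GB.vector_space_axioms by (simp add: aiso_def)
  interpret F: aiso scA scB f by (rule aF)
  define fi where "fi = inv f"
  have aFI: "aiso scB scA fi"
    using F.inv_iso GA.vector_space_axioms GB.vector_space_axioms by (simp add: aiso_def fi_def)
  interpret FI: aiso scB scA fi by (rule aFI)
  define N where "N = GB.ge 1"
  have dd: "d = GA.dim (A 1)" using assms(6) by simp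
  have I'id: "two_sided_ideal scA (fi ` N)" unfolding N_def by (rule FI.ideal_img[OF GB.ideal_ge1])
  have I'cd: "quot_dim_eq scA UNIV (fi ` N) 1"
    using FI.quot_img[OF GB.codim_ge1] FI.surjf unfolding N_def by simp
  have W'sub: "GA.subspace (fi ` B 1)" by (rule FI.subspace_image[OF GB.subA])
  have W'I: "fi ` B 1 \<subseteq> fi ` N" unfolding N_def using GB.A1_ge1 by blast
  have W'cap: "ideal_square scA (fi ` N) \<inter> fi ` B 1 \<subseteq> {0}"
  proof -
    have "ideal_square scA (fi ` N) \<inter> fi ` B 1 = fi ` (ideal_square scB N \<inter> B 1)"
      by (simp add: FI.sq_img FI.img_int)
    also have "\<dots> \<subseteq> fi ` {0}" unfolding N_def using GB.sq_cap_A1 by blast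
    finally show ?thesis by simp
  qed
  have tb: "fin_dim scA (fi ` B 1) \<and> GA.dim (fi ` B 1) \<le> GA.dim (A 1)"
    by (rule GA.tangent_bound[OF assms(5) I'id I'cd W'sub W'I W'cap])
  have B1eq: "f ` fi ` B 1 = B 1" by (simp add: image_image fi_def)
  have fB1: "fin_dim scB (B 1)" using F.fin_dim_img[of "fi ` B 1"] tb B1eq by simp
  have dB1: "GB.dim (B 1) \<le> d" using F.dim_img[of "fi ` B 1"] B1eq tb dd by simp
  have J: "codim1_ideal_tangent_dim scB (f ` GA.ge 1) d"
    using F.codim_img[OF assms(7)] GA.aug_eq by simp
  then have Jid: "two_sided_ideal scB (f ` GA.ge 1)" and Jcd: "quot_dim_eq scB UNIV (f ` GA.ge 1) 1"
    and Jt: "quot_dim_eq scB (f ` GA.ge 1) (ideal_square scB (f ` GA.ge 1)) d"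
    unfolding codim1_ideal_tangent_dim_def by auto
  obtain WJ where WJ: "GB.subspace WJ" "WJ \<subseteq> f ` GA.ge 1"
    "ideal_square scB (f ` GA.ge 1) \<inter> WJ = {0}" "GB.dim WJ = d"
    using Jt unfolding quot_dim_eq_def by blast
  have "fin_dim scB WJ \<and> GB.dim WJ \<le> GB.dim (B 1)"
    by (rule GB.tangent_bound[OF fB1 Jid Jcd WJ(1) WJ(2)]) (use WJ(3) in simp)
  then have "d \<le> GB.dim (B 1)" using WJ(4) by simp
  then have dimB1: "GB.dim (B 1) = d" using dB1 by simp
  have "codim1_ideal_tangent_dim scB N d" using GB.codim1_ge1[OF fB1] dimB1 unfolding N_def by simp
  then have "codim1_ideal_tangent_dim scA (fi ` N) d" by (rule FI.codim_img)
  then have "fi ` N = GA.ge 1" using assms(8) GA.aug_eq by simp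
  moreover have "f ` fi ` N = N" by (simp add: image_image fi_def)
  ultimately have aug: "f ` GA.ge 1 = GB.ge 1" unfolding N_def by simp
  have "giso scA A scB B f"
    using cA cB aF aug by (simp add: giso_def giso_axioms_def)
  then show ?thesis using giso.graded_iso by blast
qed


end
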